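(* Let $m\ge n$ and let $K_1,\dots,K_m\subseteq\mathbb{R}^n$ be nontrivial (i.e. $\neq\{o\}$) pointed convex cones. If $\bigcap_{j\in J}K_j\neq\{o\}$ for every $J\subseteq\{1,\dots,m\}$ with $\operatorname{card}J=n$, and $\bigcup_{j\in J}K_j\neq\mathbb{R}^n$ for every $J\subseteq\{1,\dots,m\}$ with $\operatorname{card}J=n+1$, then $\bigcap_{i=1}^mK_i\neq\{o\}$ and $\bigcup_{i=1}^mK_i\neq\mathbb{R}^n$.
   Context: $n\ge2$; $o$ is the zero vector; a cone $K$ is pointed if $K\cap(-K)=\{o\}$. *)

theory Defs
  imports "HOL-Analysis.Analysis"
begin

definition pointed_cone :: "'a::real_vector set \<Rightarrow> bool" where
  "pointed_cone K \<longleftrightarrow> K \<inter> uminus ` K = {0}"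

end

theory Submission
  imports Defs
begin

lemma cone_nonneg_sum:
  assumes "convex_cone K" "finite S" "\<And>j. j \<in> S \<Longrightarrow> c j \<ge> 0 \<and> x j \<in> K"
  shows "(\<Sum>j\<in>S. c j *\<^sub>R x j) \<in> K"
  using assms(2,3)
proof (induction S rule: finite_induct)
  case empty then show ?case using convex_cone_contains_0[OF assms(1)] by simp
next
  case (insert a F)
  then show ?case using convex_cone_add[OF assms(1)] convex_cone_scaleR[OF assms(1)] by simp
qed

lemma pointedD: "pointed_cone K \<Longrightarrow> y \<in> K \<Longrightarrow> - y \<in> K \<Longrightarrow> y = 0"
  unfolding pointed_cone_def
  by (metis IntI image_eqI minus_minus singletonD)

lemma pointed_pos_sum:
  assumes "convex_cone K" "pointed_cone K" "finite S" "S \<noteq> {}"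
    "\<And>j. j \<in> S \<Longrightarrow> c j > 0 \<and> x j \<in> K \<and> x j \<noteq> 0"
  shows "(\<Sum>j\<in>S. c j *\<^sub>R x j) \<noteq> 0"
proof
  assume h: "(\<Sum>j\<in>S. c j *\<^sub>R x j) = 0"
  obtain k where k: "k \<in> S" using assms(4) by blast
  have r: "(\<Sum>j\<in>S-{k}. c j *\<^sub>R x j) \<in> K"
    using assms(3) by (intro cone_nonneg_sum[OF assms(1)]) (auto dest!: assms(5))
  have e: "(\<Sum>j\<in>S. c j *\<^sub>R x j) = c k *\<^sub>R x k + (\<Sum>j\<in>S-{k}. c j *\<^sub>R x j)"
    using k assms(3) by (simp add: sum.remove)
  have "- (c k *\<^sub>R x k) \<in> K" using h e r
    by (metis add.commute add_eq_0_iff)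
  moreover have "c k *\<^sub>R x k \<in> K" using assms(5)[OF k] convex_cone_scaleR[OF assms(1)] by (simp add: less_imp_le)
  ultimately have "c k *\<^sub>R x k = 0" using pointedD[OF assms(2)] by blast
  then show False using assms(5)[OF k] by simp
qed

lemma pointed_convex_minus0:
  assumes "convex_cone K" "pointed_cone K"
  shows "convex (K - {0})"
  unfolding convex_def
proof (intro ballI allI impI)
  fix x y u v assume x: "x \<in> K - {0}" and y: "y \<in> K - {0}" and uv: "0 \<le> (u::real)" "0 \<le> v" "u + v = 1"
  have cK: "convex K" using assms(1) by (simp add: convex_cone_def)
  have inK: "u *\<^sub>R x + v *\<^sub>R y \<in> K" using cK x y uv unfolding convex_def by blast
  have "u *\<^sub>R x + v *\<^sub>R y \<noteq> 0"
  proof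
    assume z: "u *\<^sub>R x + v *\<^sub>R y = 0"
    show False
    proof (cases "u = 0")
      case True then show ?thesis using z uv y by simp
    next
      case False
      have a: "u *\<^sub>R x \<in> K" using convex_cone_scaleR[OF assms(1)] uv x by auto
      have b: "- (u *\<^sub>R x) \<in> K" using z convex_cone_scaleR[OF assms(1)] uv y
        by (metis DiffD1 add_eq_0_iff)
      have "u *\<^sub>R x = 0" using pointedD[OF assms(2) a b] .
      then show False using False x by simp
    qed
  qed
  then show "u *\<^sub>R x + v *\<^sub>R y \<in> K - {0}" using inK by simp
qed

lemma pair_sum:
  fixes x :: "nat \<Rightarrow> 'a::real_vector"
  assumes "finite J" "a \<in> J" "b \<in> J" "a \<noteq> b" "x a = x b"
  shows "(\<Sum>j\<in>J. (if j = a then 1 else if j = b then -1 else (0::real)) *\<^sub>R x j) = 0"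
proof -
  have "(\<Sum>j\<in>J. (if j = a then 1 else if j = b then -1 else (0::real)) *\<^sub>R x j)
     = (\<Sum>j\<in>J. (if j = a then x a else 0) + (if j = b then - x b else 0))"
    by (rule sum.cong) (auto simp: assms)
  also have "\<dots> = (\<Sum>j\<in>J. (if j = a then x a else 0)) + (\<Sum>j\<in>J. (if j = b then - x b else 0))"
    by (rule sum.distrib)
  also have "\<dots> = 0" using assms by (simp only: sum.delta) simp
  finally show ?thesis .
qed

lemma exists_dep:
  fixes x :: "nat \<Rightarrow> 'a::euclidean_space"
  assumes "finite J" "card J > DIM('a)"
  shows "\<exists>u. (\<exists>j\<in>J. u j \<noteq> 0) \<and> (\<Sum>j\<in>J. u j *\<^sub>R x j) = 0"
proof (cases "inj_on x J")
  case True
  have "card (x ` J) > DIM('a)" using True assms by (simp add: card_image)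
  then have "dependent (x ` J)" using dependent_biggerset by blast
  then have "\<exists>w. (\<exists>v\<in>x ` J. w v \<noteq> 0) \<and> (\<Sum>v\<in>x ` J. w v *\<^sub>R v) = 0"
    using real_vector.dependent_finite[of "x ` J"] assms(1) by simp
  then obtain w where w: "\<exists>v\<in>x ` J. w v \<noteq> 0" "(\<Sum>v\<in>x ` J. w v *\<^sub>R v) = 0"
    by blast
  have "(\<Sum>j\<in>J. (w \<circ> x) j *\<^sub>R x j) = 0"
    using w(2) sum.reindex[OF True, of "\<lambda>v. w v *\<^sub>R v"] by simp
  moreover obtain v where "v \<in> x ` J" "w v \<noteq> 0" using w(1) by blast
  then obtain j where "j \<in> J" "(w \<circ> x) j \<noteq> 0" by force
  ultimately show ?thesis by blast
next
  case False
  then obtain a b where ab: "a \<in> J" "b \<in> J" "a \<noteq> b" "x a = x b" unfolding inj_on_def by blast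
  define u where "u j = (if j = a then 1 else if j = b then -1 else (0::real))" for j
  have "(\<Sum>j\<in>J. u j *\<^sub>R x j) = (\<Sum>j\<in>J. (if j = a then x a else 0) + (if j = b then - x b else 0))"
    by (rule sum.cong) (auto simp: u_def ab)
  also have "\<dots> = (\<Sum>j\<in>J. (if j = a then x a else 0)) + (\<Sum>j\<in>J. (if j = b then - x b else 0))"
    by (rule sum.distrib)
  also have "\<dots> = 0" using ab assms(1) by (simp only: sum.delta) simp
  finally have "(\<Sum>j\<in>J. u j *\<^sub>R x j) = 0" .
  moreover have "u a \<noteq> 0" by (simp add: u_def)
  ultimately show ?thesis using ab by blast
qed


lemma core:
  fixes K :: "nat \<Rightarrow> 'a::euclidean_space set" and x :: "nat \<Rightarrow> 'a"
  assumes J: "finite J" "card J = DIM('a) + 1"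
    and cK: "\<And>i. i \<in> J \<Longrightarrow> convex_cone (K i)"
    and pK: "\<And>i. i \<in> J \<Longrightarrow> pointed_cone (K i)"
    and x0: "\<And>j. j \<in> J \<Longrightarrow> x j \<noteq> 0"
    and xK: "\<And>i j. i \<in> J \<Longrightarrow> j \<in> J \<Longrightarrow> j \<noteq> i \<Longrightarrow> x j \<in> K i"
    and U: "(\<Union>i\<in>J. K i) \<noteq> UNIV"
  shows "\<exists>y. y \<noteq> 0 \<and> (\<forall>i\<in>J. y \<in> K i)"
proof -
  define P where "P u \<longleftrightarrow> (\<exists>j\<in>J. u j \<noteq> 0) \<and> (\<Sum>j\<in>J. u j *\<^sub>R x j) = 0" for u :: "nat \<Rightarrow> real"
  define sz where "sz u = card {j\<in>J. u j \<noteq> 0}" for u :: "nat \<Rightarrow> real"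
  obtain u0 where "P u0" using exists_dep[OF J(1), of x] J(2) unfolding P_def by auto
  then obtain u where Pu: "P u" and umin: "\<And>v. P v \<Longrightarrow> sz u \<le> sz v"
    using ex_has_least_nat[of P u0 sz] by blast
  show ?thesis
  proof (cases "(\<exists>a\<in>J. u a > 0) \<and> (\<exists>b\<in>J. u b < 0)")
    case True
    then obtain a b where ab: "a \<in> J" "u a > 0" "b \<in> J" "u b < 0" by blast
    define Pp where "Pp = {j\<in>J. u j > 0}"
    define Nn where "Nn = {j\<in>J. u j < 0}"
    define y where "y = (\<Sum>j\<in>Pp. u j *\<^sub>R x j)"
    have fin: "finite Pp" "finite Nn" using J(1) by (auto simp: Pp_def Nn_def)
    have split: "(\<Sum>j\<in>J. u j *\<^sub>R x j) = (\<Sum>j\<in>Pp. u j *\<^sub>R x j) + (\<Sum>j\<in>Nn. u j *\<^sub>R x j)"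
    proof -
      have z: "\<forall>i\<in>J - (Pp \<union> Nn). u i *\<^sub>R x i = 0"
        by (auto simp: Pp_def Nn_def linorder_not_less order.antisym)
      have "(\<Sum>j\<in>J. u j *\<^sub>R x j) = (\<Sum>j\<in>Pp \<union> Nn. u j *\<^sub>R x j)"
        using z by (intro sum.mono_neutral_right[OF J(1)]) (auto simp: Pp_def Nn_def)
      also have "\<dots> = (\<Sum>j\<in>Pp. u j *\<^sub>R x j) + (\<Sum>j\<in>Nn. u j *\<^sub>R x j)"
        by (rule sum.union_disjoint) (use fin in \<open>auto simp: Pp_def Nn_def\<close>)
      finally show ?thesis .
    qed
    have yN: "y = (\<Sum>j\<in>Nn. (- u j) *\<^sub>R x j)"
    proof -
      have "y + (\<Sum>j\<in>Nn. u j *\<^sub>R x j) = 0" using split Pu unfolding P_def y_def by simp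
      then show ?thesis by (simp add: sum_negf add_eq_0_iff)
    qed
    show ?thesis
    proof (cases "y = 0")
      case True
      define v where "v j = (if u j > 0 then u j else 0)" for j
      have "(\<Sum>j\<in>J. v j *\<^sub>R x j) = (\<Sum>j\<in>Pp. u j *\<^sub>R x j)"
        by (rule sum.mono_neutral_cong_right) (auto simp: J(1) Pp_def v_def)
      then have "P v" using True ab unfolding P_def y_def v_def by force
      then have "sz u \<le> sz v" by (rule umin)
      moreover have "sz v < sz u"
      proof -
        have s1: "{j\<in>J. v j \<noteq> 0} \<subseteq> {j\<in>J. u j \<noteq> 0}"
          by (auto simp: v_def split: if_splits)
        have s2: "b \<in> {j\<in>J. u j \<noteq> 0} - {j\<in>J. v j \<noteq> 0}"
          using ab by (auto simp: v_def)
        have "{j\<in>J. v j \<noteq> 0} \<subset> {j\<in>J. u j \<noteq> 0}" using s1 s2 by blast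
        then show ?thesis unfolding sz_def using J(1) by (simp add: psubset_card_mono)
      qed
      ultimately show ?thesis by simp
    next
      case False
      have "\<forall>i\<in>J. y \<in> K i"
      proof
        fix i assume i: "i \<in> J"
        show "y \<in> K i"
        proof (cases "u i > 0")
          case True
          then have "i \<notin> Nn" by (auto simp: Nn_def)
          then show ?thesis unfolding yN using fin
            by (intro cone_nonneg_sum[OF cK[OF i]]) (auto simp: Nn_def intro!: xK[OF i])
        next
          case False
          then have "i \<notin> Pp" by (auto simp: Pp_def)
          then show ?thesis unfolding y_def using fin
            by (intro cone_nonneg_sum[OF cK[OF i]]) (auto simp: Pp_def intro!: xK[OF i])
        qed
      qed
      then show ?thesis using False by blast
    qed
  next
    case False
    obtain w where Pw: "P w" and wmin: "\<And>v. P v \<Longrightarrow> sz w \<le> sz v" and wpos: "\<And>j. j \<in> J \<Longrightarrow> w j \<ge> 0"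
    proof (cases "\<forall>j\<in>J. u j \<ge> 0")
      case True then show ?thesis using that Pu umin by blast
    next
      case F2: False
      then have neg: "\<forall>j\<in>J. u j \<le> 0" using False by force
      have "P (\<lambda>j. - u j)" using Pu unfolding P_def by (simp add: sum_negf)
      moreover have "sz (\<lambda>j. - u j) = sz u" by (simp add: sz_def)
      ultimately show ?thesis using that[of "\<lambda>j. - u j"] umin neg by auto
    qed
    define S where "S = {j\<in>J. w j \<noteq> 0}"
    have False
    proof (cases "S = J")
      case False
      then obtain i where i: "i \<in> J" "w i = 0" using S_def by auto
      have "(\<Sum>j\<in>S. w j *\<^sub>R x j) = (\<Sum>j\<in>J. w j *\<^sub>R x j)"
        by (rule sum.mono_neutral_left) (auto simp: J(1) S_def)
      then have "(\<Sum>j\<in>S. w j *\<^sub>R x j) = 0" using Pw unfolding P_def by simp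
      moreover have "(\<Sum>j\<in>S. w j *\<^sub>R x j) \<noteq> 0"
      proof (rule pointed_pos_sum[OF cK[OF i(1)] pK[OF i(1)]])
        show "finite S" using J(1) by (simp add: S_def)
        show "S \<noteq> {}" using Pw unfolding P_def S_def by auto
        fix j assume j: "j \<in> S"
        then have "j \<in> J" "w j \<noteq> 0" by (auto simp: S_def)
        then show "0 < w j \<and> x j \<in> K (i) \<and> x j \<noteq> 0"
          using wpos[of j] i xK[OF i(1), of j] x0[of j] by (auto simp: less_le)
      qed
      ultimately show False by simp
    next
      case True
      then have wp: "\<And>j. j \<in> J \<Longrightarrow> w j > 0" using wpos unfolding S_def by (force simp: less_le)
      have szw: "sz w = card J" using True unfolding sz_def S_def by simp
      have "J \<noteq> {}" using J(2) by auto
      then obtain k where k: "k \<in> J" by blast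
      define J' where "J' = J - {k}"
      have finJ': "finite J'" using J(1) by (simp add: J'_def)
      have cardJ': "card J' = DIM('a)" using J k by (simp add: J'_def)
      have C: "v j = 0" if v0: "(\<Sum>j\<in>J'. v j *\<^sub>R x j) = 0" and jJ: "j \<in> J'" for v j
      proof (rule ccontr)
        assume vj: "v j \<noteq> 0"
        define t where "t = w j / v j"
        define v' where "v' i = (if i \<in> J' then v i else 0)" for i
        define z where "z i = w i - t * v' i" for i
        have sv': "(\<Sum>i\<in>J. v' i *\<^sub>R x i) = 0"
        proof -
          have "(\<Sum>i\<in>J. v' i *\<^sub>R x i) = (\<Sum>i\<in>J'. v i *\<^sub>R x i)"
            by (rule sum.mono_neutral_cong_right) (auto simp: J(1) J'_def v'_def)
          then show ?thesis using v0 by simp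
        qed
        have "(\<Sum>i\<in>J. z i *\<^sub>R x i) = (\<Sum>i\<in>J. w i *\<^sub>R x i) - t *\<^sub>R (\<Sum>i\<in>J. v' i *\<^sub>R x i)"
          by (simp add: z_def scaleR_diff_left sum_subtractf scaleR_sum_right)
        also have "\<dots> = 0" using Pw sv' unfolding P_def by simp
        finally have "P z" unfolding P_def using k wp[OF k]
          by (auto simp: z_def v'_def J'_def)
        then have "sz w \<le> sz z" by (rule wmin)
        moreover have "sz z < card J"
        proof -
          have "z j = 0" using vj jJ by (simp add: z_def v'_def t_def)
          then have "{i\<in>J. z i \<noteq> 0} \<subseteq> J - {j}" by auto
          then have "sz z \<le> card (J - {j})" unfolding sz_def using J(1) by (simp add: card_mono)
          also have "\<dots> < card J" using jJ J(1) J(2) by (auto simp: J'_def)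
          finally show ?thesis .
        qed
        ultimately show False using szw by simp
      qed
      have inj: "inj_on x J'"
      proof (rule inj_onI, rule ccontr)
        fix a b assume ab: "a \<in> J'" "b \<in> J'" "x a = x b" "a \<noteq> b"
        have "(\<lambda>j. if j = a then 1 else if j = b then -1 else (0::real)) a = 0"
          by (rule C[OF pair_sum[OF finJ' ab(1,2,4,3)] ab(1)])
        then show False by simp
      qed
      have indep: "independent (x ` J')"
        unfolding eucl.independent_explicit
      proof (intro conjI allI impI ballI)
        show "finite (x ` J')" using finJ' by simp
        fix c v assume c: "(\<Sum>v\<in>x ` J'. c v *\<^sub>R v) = 0" and v: "v \<in> x ` J'"
        have "(\<Sum>j\<in>J'. (c \<circ> x) j *\<^sub>R x j) = 0"
          using c sum.reindex[OF inj, of "\<lambda>v. c v *\<^sub>R v"] by simp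
        then show "c v = 0" using C v by auto
      qed
      have cardx: "card (x ` J') = dim (UNIV :: 'a set)" using inj cardJ' by (simp add: card_image dim_UNIV)
      have spanU: "UNIV \<subseteq> span (x ` J')"
        using eucl.card_eq_dim[of "x ` J'" UNIV] cardx finJ' indep by simp
      have "UNIV \<subseteq> (\<Union>i\<in>J. K i)"
      proof
        fix z :: 'a
        have "z \<in> span (x ` J')" using spanU by blast
        then obtain c where "z = (\<Sum>v\<in>x ` J'. c v *\<^sub>R v)"
          using real_vector.span_finite[of "x ` J'"] finJ' by auto
        then have zc: "z = (\<Sum>j\<in>J'. c (x j) *\<^sub>R x j)"
          using sum.reindex[OF inj, of "\<lambda>v. c v *\<^sub>R v"] by simp
        define c' where "c' j = (if j \<in> J' then c (x j) else 0)" for j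
        have zc': "z = (\<Sum>j\<in>J. c' j *\<^sub>R x j)"
        proof -
          have "(\<Sum>j\<in>J. c' j *\<^sub>R x j) = (\<Sum>j\<in>J'. c (x j) *\<^sub>R x j)"
            by (rule sum.mono_neutral_cong_right) (auto simp: J(1) J'_def c'_def)
          then show ?thesis using zc by simp
        qed
        define q where "q = Min ((\<lambda>j. c' j / w j) ` J)"
        have "q \<in> (\<lambda>j. c' j / w j) ` J" unfolding q_def using J(1) k by (intro Min_in) auto
        then obtain i where i: "i \<in> J" "q = c' i / w i" by auto
        have qle: "q \<le> c' j / w j" if "j \<in> J" for j unfolding q_def using J(1) that by (intro Min_le) auto
        define e where "e j = c' j - q * w j" for j
        have ze: "z = (\<Sum>j\<in>J. e j *\<^sub>R x j)"
        proof -
          have "(\<Sum>j\<in>J. e j *\<^sub>R x j) = (\<Sum>j\<in>J. c' j *\<^sub>R x j) - q *\<^sub>R (\<Sum>j\<in>J. w j *\<^sub>R x j)"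
            by (simp add: e_def scaleR_diff_left sum_subtractf scaleR_sum_right)
          then show ?thesis using zc' Pw unfolding P_def by simp
        qed
        have ei: "e i = 0" using i wp[OF i(1)] by (simp add: e_def)
        have "z = (\<Sum>j\<in>J-{i}. e j *\<^sub>R x j)"
          using ze ei i(1) J(1) by (simp add: sum.remove)
        moreover have "e j \<ge> 0" if "j \<in> J" for j
          using qle[OF that] wp[OF that] by (simp add: e_def pos_le_divide_eq)
        ultimately have "z \<in> K i" using J(1)
          by (auto intro!: cone_nonneg_sum[OF cK[OF i(1)]] xK[OF i(1)])
        then show "z \<in> (\<Union>i\<in>J. K i)" using i(1) by blast
      qed
      then show False using U by blast
    qed
    then show ?thesis ..
  qed
qed


theorem mainTheorem13:
  fixes K :: "nat \<Rightarrow> (real ^ 'n) set" and m :: nat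
  assumes n2: "CARD('n) \<ge> 2"
    and mn: "m \<ge> CARD('n)"
    and cone: "\<And>i. i \<in> {1..m} \<Longrightarrow> convex_cone (K i)"
    and pointed: "\<And>i. i \<in> {1..m} \<Longrightarrow> pointed_cone (K i)"
    and nontriv: "\<And>i. i \<in> {1..m} \<Longrightarrow> K i \<noteq> {0}"
    and inter: "\<And>J. J \<subseteq> {1..m} \<Longrightarrow> card J = CARD('n) \<Longrightarrow> (\<Inter>j\<in>J. K j) \<noteq> {0}"
    and union: "\<And>J. J \<subseteq> {1..m} \<Longrightarrow> card J = CARD('n) + 1 \<Longrightarrow> (\<Union>j\<in>J. K j) \<noteq> UNIV"
  shows "(\<Inter>i\<in>{1..m}. K i) \<noteq> {0} \<and> (\<Union>i\<in>{1..m}. K i) \<noteq> UNIV"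
proof -
  let ?n = "CARD('n)"
  have K0: "\<And>i. i \<in> {1..m} \<Longrightarrow> 0 \<in> K i" using cone convex_cone_contains_0 by blast
  have nz: "\<exists>y. y \<noteq> 0 \<and> (\<forall>i\<in>J. y \<in> K i)" if J: "J \<subseteq> {1..m}" "card J = ?n" for J
  proof -
    have "(\<Inter>j\<in>J. K j) \<noteq> {0}" using inter J .
    moreover have "0 \<in> (\<Inter>j\<in>J. K j)" using K0 J by blast
    ultimately obtain y where "y \<in> (\<Inter>j\<in>J. K j)" "y \<noteq> 0" by blast
    then show ?thesis by blast
  qed
  have small: "\<exists>y. y \<noteq> 0 \<and> (\<forall>i\<in>J. y \<in> K i)" if J: "J \<subseteq> {1..m}" "card J \<le> ?n" for J
  proof -
    have finJ: "finite J" using J(1) finite_subset by blast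
    have "card ({1..m} - J) = m - card J" using J(1) finJ by (simp add: card_Diff_subset)
    then have "card ({1..m} - J) \<ge> ?n - card J" using mn by simp
    then obtain D where D: "D \<subseteq> {1..m} - J" "card D = ?n - card J"
      using obtain_subset_with_card_n by metis
    have finD: "finite D" using D(1) finite_subset by blast
    have "card (J \<union> D) = ?n" using D finJ finD J(2)
      by (subst card_Un_disjoint) auto
    moreover have "J \<union> D \<subseteq> {1..m}" using J(1) D(1) by blast
    ultimately obtain y where "y \<noteq> 0" "\<forall>i\<in>J \<union> D. y \<in> K i" using nz by blast
    then show ?thesis by blast
  qed
  have big: "\<exists>y. y \<noteq> 0 \<and> (\<forall>i\<in>J. y \<in> K i)" if J: "J \<subseteq> {1..m}" "card J = ?n + 1" for J
  proof -
    have finJ: "finite J" using J(1) finite_subset by blast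
    have "\<forall>j\<in>J. \<exists>z. z \<noteq> 0 \<and> (\<forall>i\<in>J - {j}. z \<in> K i)"
    proof
      fix j assume j: "j \<in> J"
      have "card (J - {j}) = ?n" using j finJ J(2) by simp
      then show "\<exists>z. z \<noteq> 0 \<and> (\<forall>i\<in>J - {j}. z \<in> K i)" using nz[of "J - {j}"] J(1) by blast
    qed
    then obtain x where x: "\<And>j. j \<in> J \<Longrightarrow> x j \<noteq> 0 \<and> (\<forall>i\<in>J - {j}. x j \<in> K i)" by metis
    show ?thesis
    proof (rule core[of J K x])
      show "finite J" by (rule finJ)
      show "card J = DIM(real ^ 'n) + 1" using J(2) by simp
      show "\<And>i. i \<in> J \<Longrightarrow> convex_cone (K i)" using cone J(1) by blast
      show "\<And>i. i \<in> J \<Longrightarrow> pointed_cone (K i)" using pointed J(1) by blast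
      show "\<And>j. j \<in> J \<Longrightarrow> x j \<noteq> 0" using x by blast
      show "\<And>i j. i \<in> J \<Longrightarrow> j \<in> J \<Longrightarrow> j \<noteq> i \<Longrightarrow> x j \<in> K i" using x by blast
      show "(\<Union>i\<in>J. K i) \<noteq> UNIV" using union J .
    qed
  qed
  have le: "\<exists>y. y \<noteq> 0 \<and> (\<forall>i\<in>J. y \<in> K i)" if J: "J \<subseteq> {1..m}" "card J \<le> ?n + 1" for J
  proof (cases "card J \<le> ?n")
    case True then show ?thesis using small J by blast
  next
    case False then show ?thesis using big J by simp
  qed
  define g where "g i = K i - {0}" for i
  define F where "F = g ` {1..m}"
  have m1: "1 \<in> {1..m}" using mn n2 by simp
  obtain y where y: "y \<noteq> 0" "\<And>i. i \<in> {1..m} \<Longrightarrow> y \<in> K i"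
  proof (cases "card F \<le> ?n + 1")
    case True
    obtain U where U: "U \<subseteq> {1..m}" "inj_on g U" "F = g ` U"
      using subset_image_inj[of F g "{1..m}"] F_def by blast
    have "card U \<le> ?n + 1" using True U card_image by metis
    then obtain y where y: "y \<noteq> 0" "\<forall>i\<in>U. y \<in> K i" using le U(1) by blast
    have "y \<in> K i" if i: "i \<in> {1..m}" for i
    proof -
      have "g i \<in> g ` U" using i U(3) F_def by blast
      then obtain i' where "i' \<in> U" "g i = g i'" by blast
      then show ?thesis using y unfolding g_def by blast
    qed
    then show ?thesis using that y(1) by blast
  next
    case False
    have "\<Inter>F \<noteq> {}"
    proof (rule Helly)
      show "card F \<ge> DIM(real ^ 'n) + 1" using False by simp
      show "\<forall>s\<in>F. convex s" unfolding F_def g_def using pointed_convex_minus0[OF cone pointed] by blast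
      fix t assume t: "t \<subseteq> F" "card t = DIM(real ^ 'n) + 1"
      obtain U where U: "U \<subseteq> {1..m}" "inj_on g U" "t = g ` U"
        using subset_image_inj[of t g "{1..m}"] t(1) F_def by blast
      have "card U = ?n + 1" using t(2) U card_image by fastforce
      then obtain y where "y \<noteq> 0" "\<forall>i\<in>U. y \<in> K i" using big U(1) by blast
      then have "y \<in> \<Inter>t" using U(3) by (auto simp: g_def)
      then show "\<Inter>t \<noteq> {}" by blast
    qed
    then obtain y where yF: "y \<in> \<Inter>F" by blast
    have "y \<in> g i" if "i \<in> {1..m}" for i using yF that F_def by blast
    then show ?thesis using that m1 unfolding g_def by blast
  qed
  have ny: "- y \<notin> K i" if i: "i \<in> {1..m}" for i
    using pointedD[OF pointed[OF i] y(2)[OF i]] y(1) by auto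
  show ?thesis
  proof
    show "(\<Inter>i\<in>{1..m}. K i) \<noteq> {0}" using y by blast
    show "(\<Union>i\<in>{1..m}. K i) \<noteq> UNIV" using ny by blast
  qed
qed

end
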